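(* Let $r\ge1$, let $\mathcal{A}:\mathbb{C}^{m\times n}\to\mathbb{C}^p$ be linear with $\delta_{4r}(\mathcal{A})\le0.04$, let $X_0\in\mathbb{C}^{m\times n}$ with $\mathrm{rank}(X_0)\le r$, let $\nu\in\mathbb{C}^p$ and $b=\mathcal{A}X_0+\nu$. Let $\widehat{X}\in\mathbb{C}^{m\times n}$ with $\mathrm{rank}(\widehat{X})\le r$, and let $\Psi'$ be any maximizer of $\|\mathcal{P}_\Psi\mathcal{A}^*(b-\mathcal{A}\widehat{X})\|_F$ over $\Psi\subset\mathbb{O}$ with $|\Psi|\le2r$. Then $$\|\mathcal{P}_{\Psi'}^\perp(X_0-\widehat{X})\|_F\le0.24\|X_0-\widehat{X}\|_F+2.13\|\nu\|_2.$$
   Context: $\mathbb{C}^p$ has inner product $\langle x,y\rangle=y^Hx$ and norm $\|\cdot\|_2$; $\mathbb{C}^{m\times n}$ has inner product $\langle X,Y\rangle=\mathrm{tr}(Y^HX)$ and Frobenius norm $\|\cdot\|_F$; $\mathcal{A}^*$ is the adjoint of $\mathcal{A}$. $\delta_s(\mathcal{A})$ is the smallest $\delta\ge0$ such that $(1-\delta)\|X\|_F^2\le\|\mathcal{A}X\|_2^2\le(1+\delta)\|X\|_F^2$ for all $X$ with $\mathrm{rank}(X)\le s$. The set of atoms $\mathbb{O}$ is a set of unit-Frobenius-norm rank-one matrices such that every nonzero rank-one matrix is a scalar multiple of exactly one element of $\mathbb{O}$. For $\Psi\subset\mathbb{O}$, $\mathcal{P}_\Psi$ is the orthogonal projection onto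 $\mathrm{span}(\Psi)$ and $\mathcal{P}_\Psi^\perp=I-\mathcal{P}_\Psi$. (In the paper, $\widehat{X}$ is the previous ADMiRA estimate, which has rank at most $r$.) *)

theory Defs
  imports "HOL-Analysis.Analysis"
begin

text \<open>Matrices in C^(m x n) are modelled as complex^'n^'m (row i = X$i); the library
  norm on this type is the Frobenius norm, and on complex^'p it is the 2-norm.
  The library rank (row rank over the field) is the complex rank.\<close>

definition mscale :: "complex \<Rightarrow> complex^'n^'m \<Rightarrow> complex^'n^'m" where
  "mscale c X = (\<chi> i j. c * X$i$j)"

definition frob_inner :: "complex^'n^'m \<Rightarrow> complex^'n^'m \<Rightarrow> complex" where
  "frob_inner X Y = (\<Sum>i\<in>UNIV. \<Sum>j\<in>UNIV. X$i$j * cnj (Y$i$j))"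

definition vinner :: "complex^'p \<Rightarrow> complex^'p \<Rightarrow> complex" where
  "vinner x y = (\<Sum>k\<in>UNIV. x$k * cnj (y$k))"

definition clinear_op :: "(complex^'n^'m \<Rightarrow> complex^'p) \<Rightarrow> bool" where
  "clinear_op A \<longleftrightarrow> (\<forall>X Y. A (X + Y) = A X + A Y) \<and> (\<forall>c X. A (mscale c X) = c *s A X)"

definition rip_const :: "(complex^'n^'m \<Rightarrow> complex^'p) \<Rightarrow> nat \<Rightarrow> real" where
  "rip_const A s = Inf {\<delta>. \<delta> \<ge> 0 \<and> (\<forall>X. rank X \<le> s \<longrightarrow>
       (1 - \<delta>) * (norm X)\<^sup>2 \<le> (norm (A X))\<^sup>2 \<and> (norm (A X))\<^sup>2 \<le> (1 + \<delta>) * (norm X)\<^sup>2)}"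

definition atom_set :: "(complex^'n^'m) set \<Rightarrow> bool" where
  "atom_set Ats \<longleftrightarrow> (\<forall>a\<in>Ats. rank a = 1 \<and> norm a = 1) \<and>
     (\<forall>X. rank X = 1 \<longrightarrow> (\<exists>!a. a \<in> Ats \<and> (\<exists>c. X = mscale c a)))"

definition mspan :: "(complex^'n^'m) set \<Rightarrow> (complex^'n^'m) set" where
  "mspan S = {(\<Sum>a\<in>F. mscale (c a) a) | F c. finite F \<and> F \<subseteq> S}"

definition proj :: "(complex^'n^'m) set \<Rightarrow> complex^'n^'m \<Rightarrow> complex^'n^'m" where
  "proj S X = (THE Y. Y \<in> mspan S \<and> (\<forall>Z\<in>mspan S. frob_inner (X - Y) Z = 0))"

definition proj_perp :: "(complex^'n^'m) set \<Rightarrow> complex^'n^'m \<Rightarrow> complex^'n^'m" where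
  "proj_perp S X = X - proj S X"

end

theory Submission imports Defs begin



lemma row_eq: "row i A = A $ i" by (simp add: row_def vec_eq_iff)

lemma rows_eq: "rows A = range (\<lambda>i. A $ i)" by (auto simp: rows_def row_eq)

lemma rank_span_le:
  fixes Z X Y :: "'a::field^'n^'m"
  assumes "rows Z \<subseteq> vec.span (rows X \<union> rows Y)"
  shows "rank Z \<le> rank X + rank Y"
proof -
  obtain B1 where B1: "B1 \<subseteq> rows X" "vec.independent B1" "rows X \<subseteq> vec.span B1" "card B1 = vec.dim (rows X)"
    using vec.basis_exists by blast
  obtain B2 where B2: "B2 \<subseteq> rows Y" "vec.independent B2" "rows Y \<subseteq> vec.span B2" "card B2 = vec.dim (rows Y)"
    using vec.basis_exists by blast
  have f: "finite B1" "finite B2" using B1(2) B2(2) vec.finiteI_independent by auto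
  have "rows X \<union> rows Y \<subseteq> vec.span (B1 \<union> B2)"
    using B1(3) B2(3) vec.span_mono[of B1 "B1 \<union> B2"] vec.span_mono[of B2 "B1 \<union> B2"] by blast
  then have "vec.span (rows X \<union> rows Y) \<subseteq> vec.span (B1 \<union> B2)"
    using vec.span_minimal vec.subspace_span by blast
  then have "rows Z \<subseteq> vec.span (B1 \<union> B2)" using assms by blast
  then have "vec.dim (rows Z) \<le> card (B1 \<union> B2)" using f by (intro vec.dim_le_card) auto
  also have "\<dots> \<le> card B1 + card B2" by (rule card_Un_le)
  finally show ?thesis using B1 B2 by (simp add: row_rank_def_gen)
qed

lemma rank_add_le: "rank (X + Y) \<le> rank X + rank (Y::'a::field^'n^'m)"
proof (rule rank_span_le)
  show "rows (X + Y) \<subseteq> vec.span (rows X \<union> rows Y)"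
  proof
    fix v assume "v \<in> rows (X + Y)"
    then obtain i where v: "v = X$i + Y$i" by (auto simp: rows_eq)
    have "X$i \<in> vec.span (rows X \<union> rows Y)" "Y$i \<in> vec.span (rows X \<union> rows Y)"
      by (auto intro!: vec.span_base simp: rows_eq)
    then show "v \<in> vec.span (rows X \<union> rows Y)" using v vec.span_add by blast
  qed
qed

lemma rank_diff_le: "rank (X - Y) \<le> rank X + rank (Y::'a::field^'n^'m)"
proof (rule rank_span_le)
  show "rows (X - Y) \<subseteq> vec.span (rows X \<union> rows Y)"
  proof
    fix v assume "v \<in> rows (X - Y)"
    then obtain i where v: "v = X$i - Y$i" by (auto simp: rows_eq)
    have "X$i \<in> vec.span (rows X \<union> rows Y)" "Y$i \<in> vec.span (rows X \<union> rows Y)"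
      by (auto intro!: vec.span_base simp: rows_eq)
    then show "v \<in> vec.span (rows X \<union> rows Y)" using v vec.span_diff by blast
  qed
qed

lemma rank_mscale_le: "rank (mscale c X) \<le> rank X"
proof -
  have "rows (mscale c X) \<subseteq> vec.span (rows X)"
  proof
    fix v assume "v \<in> rows (mscale c X)"
    then obtain i where v: "v = mscale c X $ i" by (auto simp: rows_eq)
    then have v: "v = c *s X$i" by (simp add: mscale_def vec_eq_iff)
    have "X$i \<in> vec.span (rows X)" by (auto intro!: vec.span_base simp: rows_eq)
    then show "v \<in> vec.span (rows X)" using v vec.span_scale by blast
  qed
  then have "vec.dim (rows (mscale c X)) \<le> vec.dim (vec.span (rows X))" by (rule vec.dim_subset)
  then show ?thesis by (simp add: row_rank_def_gen)
qed

lemma rank_zero_iff: "rank (X::'a::field^'n^'m) = 0 \<longleftrightarrow> X = 0"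
  proof
  assume "rank X = 0"
  then have "range (($) X) \<subseteq> {0}" by (simp add: row_rank_def_gen rows_eq)
  then show "X = 0" by (auto simp: vec_eq_iff image_subset_iff)
qed (auto simp: row_rank_def_gen rows_eq)




lemma mscale_add: "mscale c (X + Y) = mscale c X + mscale c Y"
  by (simp add: mscale_def vec_eq_iff algebra_simps)
lemma mscale_add_left: "mscale (c + d) X = mscale c X + mscale d X"
  by (simp add: mscale_def vec_eq_iff algebra_simps)
lemma mscale_mscale: "mscale c (mscale d X) = mscale (c * d) X"
  by (simp add: mscale_def vec_eq_iff algebra_simps)
lemma mscale_zero[simp]: "mscale c 0 = 0" "mscale 0 X = 0"
  by (simp_all add: mscale_def vec_eq_iff)
lemma mscale_one[simp]: "mscale 1 X = X"
  by (simp add: mscale_def vec_eq_iff)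
lemma mscale_sum: "mscale c (sum f F) = (\<Sum>a\<in>F. mscale c (f a))"
  by (induction F rule: infinite_finite_induct) (auto simp: mscale_add)
lemma scaleR_mscale: "r *\<^sub>R X = mscale (complex_of_real r) X"
  unfolding mscale_def vec_eq_iff by (simp add: vector_scaleR_component scaleR_conv_of_real[where 'a=complex])

lemma mspan_I: "finite F \<Longrightarrow> F \<subseteq> S \<Longrightarrow> X = (\<Sum>a\<in>F. mscale (c a) a) \<Longrightarrow> X \<in> mspan S"
  unfolding mspan_def by blast

lemma mspan_zero: "0 \<in> mspan S"
  by (rule mspan_I[of "{}"]) auto

lemma mspan_base: "a \<in> S \<Longrightarrow> a \<in> mspan S"
  by (rule mspan_I[of "{a}" _ _ "\<lambda>_. 1"]) auto

lemma mspan_mono: "S \<subseteq> T \<Longrightarrow> mspan S \<subseteq> mspan T"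
  unfolding mspan_def by blast

lemma mspan_scale: "X \<in> mspan S \<Longrightarrow> mscale k X \<in> mspan S"
proof -
  assume "X \<in> mspan S"
  then obtain F c where F: "finite F" "F \<subseteq> S" "X = (\<Sum>a\<in>F. mscale (c a) a)"
    unfolding mspan_def by blast
  then have "mscale k X = (\<Sum>a\<in>F. mscale (k * c a) a)"
    by (simp add: mscale_sum mscale_mscale)
  then show ?thesis using F by (intro mspan_I) auto
qed

lemma mspan_add: "X \<in> mspan S \<Longrightarrow> Y \<in> mspan S \<Longrightarrow> X + Y \<in> mspan S"
proof -
  assume "X \<in> mspan S" "Y \<in> mspan S"
  then obtain F c G d where F: "finite F" "F \<subseteq> S" "X = (\<Sum>a\<in>F. mscale (c a) a)"
     and G: "finite G" "G \<subseteq> S" "Y = (\<Sum>a\<in>G. mscale (d a) a)"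
    unfolding mspan_def by blast
  define e where "e a = (if a \<in> F then c a else 0) + (if a \<in> G then d a else 0)" for a
  have "(\<Sum>a\<in>F \<union> G. mscale (e a) a) = (\<Sum>a\<in>F \<union> G. mscale (if a \<in> F then c a else 0) a)
        + (\<Sum>a\<in>F \<union> G. mscale (if a \<in> G then d a else 0) a)"
    by (simp add: e_def mscale_add_left sum.distrib)
  also have "(\<Sum>a\<in>F \<union> G. mscale (if a \<in> F then c a else 0) a) = (\<Sum>a\<in>F. mscale (c a) a)"
    by (rule sum.mono_neutral_cong_right) (use F G in auto)
  also have "(\<Sum>a\<in>F \<union> G. mscale (if a \<in> G then d a else 0) a) = (\<Sum>a\<in>G. mscale (d a) a)"
    by (rule sum.mono_neutral_cong_right) (use F G in auto)
  finally have "X + Y = (\<Sum>a\<in>F \<union> G. mscale (e a) a)" using F G by simp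
  then show ?thesis using F G by (intro mspan_I) auto
qed

lemma mspan_sum: "(\<And>a. a \<in> F \<Longrightarrow> f a \<in> mspan S) \<Longrightarrow> sum f F \<in> mspan S"
  by (induction F rule: infinite_finite_induct) (auto simp: mspan_zero mspan_add)

lemma subspace_mspan: "subspace (mspan S)"
  unfolding subspace_def by (auto simp: mspan_zero mspan_add scaleR_mscale mspan_scale)

lemma mspan_diff: "X \<in> mspan S \<Longrightarrow> Y \<in> mspan S \<Longrightarrow> X - Y \<in> mspan S"
  using subspace_mspan subspace_diff by blast

lemma inner_frob: "inner X Y = Re (frob_inner X Y)"
  by (simp add: frob_inner_def inner_vec_def inner_complex_def Re_sum)

lemma inner_vinner: "inner x y = Re (vinner x y)"
  by (simp add: vinner_def inner_vec_def inner_complex_def)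

lemma frob_inner_mscale: "frob_inner X (mscale c Z) = cnj c * frob_inner X Z"
  by (simp add: frob_inner_def mscale_def sum_distrib_left algebra_simps)

lemma frob_zero_of_inner:
  assumes "\<forall>Z\<in>mspan S. inner X Z = 0" "Z \<in> mspan S"
  shows "frob_inner X Z = 0"
proof -
  have "Re (frob_inner X Z) = 0" using assms by (simp add: inner_frob)
  moreover have "mscale \<i> Z \<in> mspan S" using assms(2) by (rule mspan_scale)
  then have "Re (frob_inner X (mscale \<i> Z)) = 0" using assms(1) by (simp add: inner_frob)
  then have "Im (frob_inner X Z) = 0" by (simp add: frob_inner_mscale)
  ultimately show ?thesis by (simp add: complex_eq_iff)
qed

lemma proj_exists: "\<exists>Y\<in>mspan S. \<forall>Z\<in>mspan S. inner (X - Y) Z = 0"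
proof -
  obtain y z where "y \<in> span (mspan S)" "\<And>w. w \<in> span (mspan S) \<Longrightarrow> orthogonal z w" "X = y + z"
    using orthogonal_subspace_decomp_exists by blast
  moreover have "span (mspan S) = mspan S" using subspace_mspan by (rule span_eq_iff[THEN iffD2])
  ultimately show ?thesis by (intro bexI[of _ y]) (auto simp: orthogonal_def)
qed

lemma proj_char:
  assumes "Y \<in> mspan S" "\<forall>Z\<in>mspan S. inner (X - Y) Z = 0"
  shows "proj S X = Y"
  unfolding proj_def
proof (rule the_equality)
  show "Y \<in> mspan S \<and> (\<forall>Z\<in>mspan S. frob_inner (X - Y) Z = 0)"
    using assms frob_zero_of_inner by blast
next
  fix Y' assume H: "Y' \<in> mspan S \<and> (\<forall>Z\<in>mspan S. frob_inner (X - Y') Z = 0)"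
  have d: "Y - Y' \<in> mspan S" using H assms mspan_diff by blast
  have "inner (X - Y') (Y - Y') = 0" using H d by (simp add: inner_frob)
  moreover have "inner (X - Y) (Y - Y') = 0" using assms d by blast
  ultimately have "inner (Y - Y') (Y - Y') = 0" by (simp add: inner_diff_left)
  then show "Y' = Y" by simp
qed

lemma proj_in: "proj S X \<in> mspan S" and proj_orth: "Z \<in> mspan S \<Longrightarrow> inner (X - proj S X) Z = 0"
  using proj_exists[of S X] proj_char by metis+

lemma proj_pyth: "(norm X)\<^sup>2 = (norm (proj S X))\<^sup>2 + (norm (X - proj S X))\<^sup>2"
proof -
  have "orthogonal (proj S X) (X - proj S X)"
    using proj_orth[OF proj_in] by (simp add: orthogonal_def inner_commute)
  from norm_add_Pythagorean[OF this] show ?thesis by simp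
qed

lemma proj_min: assumes "Z \<in> mspan S" shows "norm (X - proj S X) \<le> norm (X - Z)"
proof -
  have "orthogonal (X - proj S X) (proj S X - Z)"
    using proj_orth[OF mspan_diff[OF proj_in assms], of X] by (simp add: orthogonal_def)
  from norm_add_Pythagorean[OF this] have "(norm (X - Z))\<^sup>2 = (norm (X - proj S X))\<^sup>2 + (norm (proj S X - Z))\<^sup>2"
    by simp
  then have "(norm (X - proj S X))\<^sup>2 \<le> (norm (X - Z))\<^sup>2" by simp
  then show ?thesis using power2_le_imp_le by fastforce
qed




lemma rank_sum_le:
  assumes "\<And>a. a \<in> F \<Longrightarrow> rank (f a) \<le> (1::nat)"
  shows "rank (sum f F :: 'a::field^'n^'m) \<le> card F"
  using assms
proof (induction F rule: infinite_finite_induct)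
  case (insert x F)
  have "rank (sum f (insert x F)) = rank (f x + sum f F)" using insert by simp
  also have "\<dots> \<le> rank (f x) + rank (sum f F)" by (rule rank_add_le)
  also have "\<dots> \<le> 1 + card F" using insert by (intro add_mono) auto
  finally show ?case using insert by simp
qed (auto simp: rank_zero_iff)

lemma rank_mspan:
  assumes "\<forall>a\<in>S. rank a \<le> 1" "finite S" "X \<in> mspan S"
  shows "rank X \<le> card S"
proof -
  obtain F c where F: "finite F" "F \<subseteq> S" "X = (\<Sum>a\<in>F. mscale (c a) a)"
    using assms(3) unfolding mspan_def by blast
  have "rank X \<le> card F" unfolding F(3)
    by (rule rank_sum_le) (use F assms(1) rank_mscale_le order_trans in blast)
  also have "\<dots> \<le> card S" using F assms(2) by (intro card_mono) auto
  finally show ?thesis .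
qed

lemma decomp:
  fixes D :: "complex^'n^'m"
  assumes atoms: "atom_set Ats"
  shows "\<exists>T. T \<subseteq> Ats \<and> finite T \<and> card T \<le> rank D \<and> D \<in> mspan T"
proof -
  obtain B where B: "B \<subseteq> rows D" "vec.independent B" "rows D \<subseteq> vec.span B" "card B = vec.dim (rows D)"
    using vec.basis_exists by blast
  have fB: "finite B" using B(2) vec.finiteI_independent by auto
  have "\<forall>i. \<exists>u. D$i = (\<Sum>v\<in>B. u v *s v)"
  proof
    fix i
    have "D$i \<in> vec.span B" using B(3) by (auto simp: rows_eq)
    then show "\<exists>u. D$i = (\<Sum>v\<in>B. u v *s v)" unfolding vec.span_finite[OF fB] by auto
  qed
  then obtain c where c: "\<And>i. D$i = (\<Sum>v\<in>B. c i v *s v)" by metis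
  define M where "M v = (\<chi> i j. c i v * v$j)" for v :: "complex^'n"
  have Dsum: "D = (\<Sum>v\<in>B. M v)"
  proof -
    have "D$i$j = (\<Sum>v\<in>B. M v)$i$j" for i j
      by (subst c) (simp add: M_def sum_component)
    then show ?thesis by (simp add: vec_eq_iff)
  qed
  have rM: "rank (M v) \<le> 1" for v
  proof -
    have "rows (M v) \<subseteq> vec.span {v}"
    proof
      fix w assume "w \<in> rows (M v)"
      then obtain i where "w = M v $ i" by (auto simp: rows_eq)
      then have "w = c i v *s v" by (simp add: M_def vec_eq_iff)
      then show "w \<in> vec.span {v}" by (simp add: vec.span_base vec.span_scale)
    qed
    then have "vec.dim (rows (M v)) \<le> card {v}" by (intro vec.dim_le_card) auto
    then show ?thesis by (simp add: row_rank_def_gen)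
  qed
  define g where "g v = (SOME a. a \<in> Ats \<and> (\<exists>k. M v = mscale k a))" for v
  have g: "g v \<in> Ats \<and> (\<exists>k. M v = mscale k (g v))" if "M v \<noteq> 0" for v
  proof -
    have "rank (M v) = 1" using rM[of v] that rank_zero_iff[of "M v"] by linarith
    then have "\<exists>a. a \<in> Ats \<and> (\<exists>k. M v = mscale k a)" using atoms unfolding atom_set_def by blast
    then show ?thesis unfolding g_def by (rule someI_ex)
  qed
  define T where "T = g ` {v\<in>B. M v \<noteq> 0}"
  have "T \<subseteq> Ats" using g by (auto simp: T_def)
  moreover have "finite T" using fB by (simp add: T_def)
  moreover have "card T \<le> rank D"
  proof -
    have "card T \<le> card {v\<in>B. M v \<noteq> 0}" unfolding T_def by (rule card_image_le) (use fB in auto)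
    also have "\<dots> \<le> card B" using fB by (intro card_mono) auto
    finally show ?thesis using B(4) by (simp add: row_rank_def_gen)
  qed
  moreover have "D \<in> mspan T" unfolding Dsum
  proof (rule mspan_sum)
    fix v assume v: "v \<in> B"
    show "M v \<in> mspan T"
    proof (cases "M v = 0")
      case True then show ?thesis by (simp add: mspan_zero)
    next
      case False
      then obtain k where k: "M v = mscale k (g v)" using g by blast
      have "g v \<in> T" using v False by (auto simp: T_def)
      then show ?thesis unfolding k by (intro mspan_scale mspan_base)
    qed
  qed
  ultimately show ?thesis by blast
qed




lemma clinear_linear:
  assumes "clinear_op (A :: complex^'n^'m \<Rightarrow> complex^'p)"
  shows "linear A"
proof (rule linearI)
  show "A (x + y) = A x + A y" for x y using assms by (simp add: clinear_op_def)
  show "A (r *\<^sub>R x) = r *\<^sub>R A x" for r x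
  proof -
    have "A (r *\<^sub>R x) = complex_of_real r *s A x" using assms by (simp add: clinear_op_def scaleR_mscale)
    also have "\<dots> = r *\<^sub>R A x"
      unfolding vec_eq_iff by (simp add: vector_scaleR_component scaleR_conv_of_real[where 'a=complex])
    finally show ?thesis .
  qed
qed

lemma rip_usable:
  fixes A :: "complex^'n^'m \<Rightarrow> complex^'p"
  assumes lin: "clinear_op A" and le: "rip_const A s \<le> d0" and lt: "d0 < d"
  shows "\<forall>X. rank X \<le> s \<longrightarrow> (1 - d) * (norm X)\<^sup>2 \<le> (norm (A X))\<^sup>2 \<and> (norm (A X))\<^sup>2 \<le> (1 + d) * (norm X)\<^sup>2"
proof -
  define R where "R = {\<delta>. \<delta> \<ge> 0 \<and> (\<forall>X. rank X \<le> s \<longrightarrow>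
       (1 - \<delta>) * (norm X)\<^sup>2 \<le> (norm (A X))\<^sup>2 \<and> (norm (A X))\<^sup>2 \<le> (1 + \<delta>) * (norm X)\<^sup>2)}"
  obtain K where K: "K > 0" "\<And>X. norm (A X) \<le> K * norm X"
    using linear_bounded_pos[OF clinear_linear[OF lin]] by blast
  have "1 + K\<^sup>2 \<in> R"
  proof -
    have "(norm (A X))\<^sup>2 \<le> (1 + (1 + K\<^sup>2)) * (norm X)\<^sup>2" for X
    proof -
      have "(norm (A X))\<^sup>2 \<le> (K * norm X)\<^sup>2" using K(2)[of X] by (intro power_mono) auto
      also have "\<dots> \<le> (1 + (1 + K\<^sup>2)) * (norm X)\<^sup>2" by (simp add: power_mult_distrib mult_right_mono)
      finally show ?thesis .
    qed
    moreover have "(1 - (1 + K\<^sup>2)) * (norm X)\<^sup>2 \<le> (norm (A X))\<^sup>2" for X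
    proof -
      have "(1 - (1 + K\<^sup>2)) * (norm X)\<^sup>2 \<le> 0" by (simp add: mult_nonpos_nonneg)
      then show ?thesis by (smt (verit) zero_le_power2)
    qed
    ultimately show ?thesis unfolding R_def by (auto intro: add_nonneg_nonneg)
  qed
  then have ne: "R \<noteq> {}" by blast
  have bdd: "bdd_below R" unfolding R_def by (rule bdd_belowI[of _ 0]) auto
  have "Inf R < d" using le lt unfolding rip_const_def R_def by simp
  then obtain \<delta> where "\<delta> \<in> R" "\<delta> < d" using cInf_less_iff[OF ne bdd] by blast
  then have d: "\<delta> < d" and H: "\<forall>X. rank X \<le> s \<longrightarrow>
       (1 - \<delta>) * (norm X)\<^sup>2 \<le> (norm (A X))\<^sup>2 \<and> (norm (A X))\<^sup>2 \<le> (1 + \<delta>) * (norm X)\<^sup>2"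
    unfolding R_def by auto
  show ?thesis
  proof (intro allI impI conjI)
    fix X :: "complex^'n^'m" assume "rank X \<le> s"
    then have h: "(1 - \<delta>) * (norm X)\<^sup>2 \<le> (norm (A X))\<^sup>2" "(norm (A X))\<^sup>2 \<le> (1 + \<delta>) * (norm X)\<^sup>2" using H by auto
    have "(1 - d) * (norm X)\<^sup>2 \<le> (1 - \<delta>) * (norm X)\<^sup>2" using d by (intro mult_right_mono) auto
    then show "(1 - d) * (norm X)\<^sup>2 \<le> (norm (A X))\<^sup>2" using h by linarith
    have "(1 + \<delta>) * (norm X)\<^sup>2 \<le> (1 + d) * (norm X)\<^sup>2" using d by (intro mult_right_mono) auto
    then show "(norm (A X))\<^sup>2 \<le> (1 + d) * (norm X)\<^sup>2" using h by linarith
  qed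
qed

lemma rip_inner_aux:
  fixes A :: "complex^'n^'m \<Rightarrow> complex^'p"
  assumes lin: "linear A" and W: "subspace W" and rk: "\<forall>Z\<in>W. rank Z \<le> s"
    and rip: "\<forall>X. rank X \<le> s \<longrightarrow> (1 - d) * (norm X)\<^sup>2 \<le> (norm (A X))\<^sup>2 \<and> (norm (A X))\<^sup>2 \<le> (1 + d) * (norm X)\<^sup>2"
    and D: "D \<in> W" and Z: "Z \<in> W"
  shows "inner (A D) (A Z) - inner D Z \<le> d * ((norm D)\<^sup>2 + (norm Z)\<^sup>2) / 2"
proof -
  have p: "D + Z \<in> W" "D - Z \<in> W" using D Z W by (auto intro: subspace_add subspace_diff)
  have 1: "(norm (A D + A Z))\<^sup>2 \<le> (1 + d) * (norm (D + Z))\<^sup>2"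
    using rip rk p linear_add[OF lin] by metis
  have 2: "(1 - d) * (norm (D - Z))\<^sup>2 \<le> (norm (A D - A Z))\<^sup>2"
    using rip rk p linear_diff[OF lin] by metis
  have e1: "(norm (A D + A Z))\<^sup>2 = (norm (A D))\<^sup>2 + 2 * inner (A D) (A Z) + (norm (A Z))\<^sup>2"
    by (simp add: power2_norm_eq_inner inner_add_left inner_add_right inner_commute)
  have e2: "(norm (A D - A Z))\<^sup>2 = (norm (A D))\<^sup>2 - 2 * inner (A D) (A Z) + (norm (A Z))\<^sup>2"
    by (simp add: power2_norm_eq_inner inner_diff_left inner_diff_right inner_commute)
  have e3: "(norm (D + Z))\<^sup>2 = (norm D)\<^sup>2 + 2 * inner D Z + (norm Z)\<^sup>2"
    by (simp add: power2_norm_eq_inner inner_add_left inner_add_right inner_commute)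
  have e4: "(norm (D - Z))\<^sup>2 = (norm D)\<^sup>2 - 2 * inner D Z + (norm Z)\<^sup>2"
    by (simp add: power2_norm_eq_inner inner_diff_left inner_diff_right inner_commute)
  from 1 2 show ?thesis unfolding e1 e2 e3 e4 by (simp add: algebra_simps)
qed

lemma rip_inner:
  fixes A :: "complex^'n^'m \<Rightarrow> complex^'p"
  assumes lin: "linear A" and W: "subspace W" and rk: "\<forall>Z\<in>W. rank Z \<le> s"
    and rip: "\<forall>X. rank X \<le> s \<longrightarrow> (1 - d) * (norm X)\<^sup>2 \<le> (norm (A X))\<^sup>2 \<and> (norm (A X))\<^sup>2 \<le> (1 + d) * (norm X)\<^sup>2"
    and D: "D \<in> W" and Z: "Z \<in> W"
  shows "inner (A D) (A Z) - inner D Z \<le> d * norm D * norm Z"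
proof (cases "D = 0 \<or> Z = 0")
  case True then show ?thesis using linear_0[OF lin] by auto
next
  case False
  then have pos: "norm D > 0" "norm Z > 0" by auto
  have "norm Z *\<^sub>R D \<in> W" "norm D *\<^sub>R Z \<in> W" using D Z W by (auto intro: subspace_scale)
  from rip_inner_aux[OF lin W rk rip this]
  have "norm Z * norm D * (inner (A D) (A Z) - inner D Z) \<le> d * ((norm Z * norm D)\<^sup>2 + (norm D * norm Z)\<^sup>2) / 2"
    by (simp add: linear_scale[OF lin] algebra_simps)
  also have "\<dots> = (norm Z * norm D) * (d * norm D * norm Z)" by (simp add: power2_eq_square algebra_simps)
  finally show ?thesis using pos by (simp add: mult_le_cancel_left_pos)
qed




theorem lemma1:
  fixes A :: "complex^'n^'m \<Rightarrow> complex^'p"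
    and Aadj :: "complex^'p \<Rightarrow> complex^'n^'m"
    and Ats :: "(complex^'n^'m) set"
    and X0 Xhat :: "complex^'n^'m"
    and \<nu> b :: "complex^'p"
    and \<Psi>' :: "(complex^'n^'m) set"
    and r :: nat
  assumes r: "r \<ge> 1"
    and lin: "clinear_op A"
    and adj: "\<forall>X y. vinner (A X) y = frob_inner X (Aadj y)"
    and rip: "rip_const A (4 * r) \<le> 0.04"
    and X0: "rank X0 \<le> r"
    and b: "b = A X0 + \<nu>"
    and Xhat: "rank Xhat \<le> r"
    and atoms: "atom_set Ats"
    and Psi'_sub: "\<Psi>' \<subseteq> Ats" and Psi'_fin: "finite \<Psi>'" and Psi'_card: "card \<Psi>' \<le> 2 * r"
    and Psi'_max: "\<forall>\<Psi>. \<Psi> \<subseteq> Ats \<and> finite \<Psi> \<and> card \<Psi> \<le> 2 * r \<longrightarrow>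
        norm (proj \<Psi> (Aadj (b - A Xhat))) \<le> norm (proj \<Psi>' (Aadj (b - A Xhat)))"
  shows "norm (proj_perp \<Psi>' (X0 - Xhat)) \<le> 0.24 * norm (X0 - Xhat) + 2.13 * norm \<nu>"
proof -
  have linA: "linear A" using lin by (rule clinear_linear)
  have RIP: "\<forall>X. rank X \<le> 4 * r \<longrightarrow> (1 - 1/10) * (norm X)\<^sup>2 \<le> (norm (A X))\<^sup>2 \<and> (norm (A X))\<^sup>2 \<le> (1 + 1/10) * (norm X)\<^sup>2"
    using rip_usable[OF lin rip, of "1/10"] by simp
  define D where "D = X0 - Xhat"
  have rD: "rank D \<le> 2 * r" using rank_diff_le[of X0 Xhat] X0 Xhat unfolding D_def by linarith
  obtain T where T: "T \<subseteq> Ats" "finite T" "card T \<le> rank D" "D \<in> mspan T"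
    using decomp[OF atoms] by blast
  define G where "G = \<Psi>' \<union> T"
  have fG: "finite G" using T Psi'_fin by (simp add: G_def)
  have cG: "card G \<le> 4 * r"
    using card_Un_le[of \<Psi>' T] T(3) rD Psi'_card unfolding G_def by linarith
  have rkW: "\<forall>Z\<in>mspan G. rank Z \<le> 4 * r"
  proof
    fix Z assume "Z \<in> mspan G"
    moreover have "\<forall>a\<in>G. rank a \<le> 1" using T(1) Psi'_sub atoms unfolding G_def atom_set_def by auto
    ultimately have "rank Z \<le> card G" using fG rank_mspan by blast
    then show "rank Z \<le> 4 * r" using cG by linarith
  qed
  have subU: "mspan \<Psi>' \<subseteq> mspan G" and subV: "mspan T \<subseteq> mspan G"
    unfolding G_def by (auto intro!: mspan_mono)
  have DW: "D \<in> mspan G" using T(4) subV by blast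
  define y where "y = Aadj (b - A Xhat)"
  have y: "y = Aadj (A D + \<nu>)" unfolding y_def b D_def by (simp add: linear_diff[OF linA] algebra_simps)
  have adjR: "inner (Aadj v) Z = inner (A Z) v" for v Z
  proof -
    have "inner (Aadj v) Z = inner Z (Aadj v)" by (rule inner_commute)
    also have "\<dots> = inner (A Z) v" using adj by (simp only: inner_frob inner_vinner)
    finally show ?thesis .
  qed
  define \<epsilon> where "\<epsilon> = 1/10 * norm D + 21/20 * norm \<nu>"
  have key: "inner (y - D) Z \<le> \<epsilon> * norm Z" if Z: "Z \<in> mspan G" for Z
  proof -
    have nAZ: "norm (A Z) \<le> 21/20 * norm Z"
    proof -
      have "(norm (A Z))\<^sup>2 \<le> (1 + 1/10) * (norm Z)\<^sup>2" using RIP rkW Z by blast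
      also have "\<dots> \<le> (21/20 * norm Z)\<^sup>2" unfolding power_mult_distrib by (intro mult_right_mono) (auto simp: power2_eq_square)
      finally show ?thesis by (rule power2_le_imp_le) simp
    qed
    have "inner (y - D) Z = (inner (A D) (A Z) - inner D Z) + inner (A Z) \<nu>"
      unfolding y inner_diff_left adjR inner_add_right by (simp add: inner_commute)
    also have "\<dots> \<le> 1/10 * norm D * norm Z + norm (A Z) * norm \<nu>"
    proof (rule add_mono)
      show "inner (A D) (A Z) - inner D Z \<le> 1/10 * norm D * norm Z"
        by (rule rip_inner[OF linA subspace_mspan rkW RIP DW Z])
      show "inner (A Z) \<nu> \<le> norm (A Z) * norm \<nu>" by (rule norm_cauchy_schwarz)
    qed
    also have "1/10 * norm D * norm Z + norm (A Z) * norm \<nu> \<le> 1/10 * norm D * norm Z + 21/20 * norm Z * norm \<nu>"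
      using mult_right_mono[OF nAZ norm_ge_zero[of \<nu>]] by simp
    finally show ?thesis by (simp add: \<epsilon>_def algebra_simps)
  qed
  define w where "w = proj G y"
  define p where "p = proj \<Psi>' y"
  define q where "q = proj T y"
  have wW: "w \<in> mspan G" unfolding w_def by (rule proj_in)
  have orthw: "inner (y - w) Z = 0" if "Z \<in> mspan G" for Z using proj_orth[OF that] by (simp add: w_def)
  have eb: "norm (w - D) \<le> \<epsilon>"
  proof -
    have eW: "w - D \<in> mspan G" using wW DW by (rule mspan_diff)
    have "(norm (w - D))\<^sup>2 = inner (y - D) (w - D) - inner (y - w) (w - D)"
      by (simp add: power2_norm_eq_inner inner_diff_left)
    also have "\<dots> \<le> \<epsilon> * norm (w - D)" using key[OF eW] orthw[OF eW] by simp
    finally have h: "norm (w - D) * norm (w - D) \<le> \<epsilon> * norm (w - D)" by (simp add: power2_eq_square)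
    show ?thesis
    proof (cases "norm (w - D) = 0")
      case True
      have "0 \<le> \<epsilon>" by (simp add: \<epsilon>_def)
      then show ?thesis using True by simp
    next
      case False then show ?thesis using h by (simp add: mult_le_cancel_right)
    qed
  qed
  have pw: "proj \<Psi>' w = p"
  proof (rule proj_char)
    show "p \<in> mspan \<Psi>'" unfolding p_def by (rule proj_in)
    show "\<forall>Z\<in>mspan \<Psi>'. inner (w - p) Z = 0"
    proof
      fix Z assume Z: "Z \<in> mspan \<Psi>'"
      have "inner (w - p) Z = inner (y - p) Z - inner (y - w) Z" by (simp add: inner_diff_left)
      then show "inner (w - p) Z = 0" using proj_orth[OF Z, of y] orthw[of Z] Z subU by (auto simp: p_def)
    qed
  qed
  have qw: "proj T w = q"
  proof (rule proj_char)
    show "q \<in> mspan T" unfolding q_def by (rule proj_in)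
    show "\<forall>Z\<in>mspan T. inner (w - q) Z = 0"
    proof
      fix Z assume Z: "Z \<in> mspan T"
      have "inner (w - q) Z = inner (y - q) Z - inner (y - w) Z" by (simp add: inner_diff_left)
      then show "inner (w - q) Z = 0" using proj_orth[OF Z, of y] orthw[of Z] Z subV by (auto simp: q_def)
    qed
  qed
  have pq: "norm q \<le> norm p"
    using Psi'_max T(1,2,3) rD unfolding p_def q_def y_def by auto
  have "(norm w)\<^sup>2 = (norm p)\<^sup>2 + (norm (w - p))\<^sup>2" using proj_pyth[of w \<Psi>'] pw by simp
  moreover have "(norm w)\<^sup>2 = (norm q)\<^sup>2 + (norm (w - q))\<^sup>2" using proj_pyth[of w T] qw by simp
  moreover have "norm (w - q) \<le> norm (w - D)" using proj_min[OF T(4), of w] qw by simp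
  moreover have "(norm q)\<^sup>2 \<le> (norm p)\<^sup>2" using pq by (simp add: power_mono)
  ultimately have "(norm (w - p))\<^sup>2 \<le> (norm (w - D))\<^sup>2"
    by (smt (verit) norm_ge_zero power_mono)
  then have wp: "norm (w - p) \<le> norm (w - D)" by (rule power2_le_imp_le) simp
  have "norm (proj_perp \<Psi>' D) = norm (D - proj \<Psi>' D)" by (simp add: proj_perp_def)
  also have "\<dots> \<le> norm (D - p)" by (rule proj_min) (simp add: p_def proj_in)
  also have "\<dots> \<le> norm (D - w) + norm (w - p)" by (rule norm_diff_triangle_ineq[THEN order_trans[rotated]]) simp
  also have "\<dots> \<le> 2 * \<epsilon>" using eb wp by (simp add: norm_minus_commute)
  also have "\<dots> \<le> 0.24 * norm D + 2.13 * norm \<nu>"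
    using norm_ge_zero[of D] norm_ge_zero[of \<nu>] unfolding \<epsilon>_def by (simp add: power2_eq_square divide_simps)
  finally show ?thesis by (simp add: D_def)
qed


end
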